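(* Let $q\ge1$ and consider an instance in $q$-dimensional Euclidean space (demand nodes and FCs are points $p\in\mathbb R^q$, $\ell_{ij}=\|p_i-p_j\|_2$) with $D_i=1$ for all $i$ and $C_j=1$ for all $j$, in which all demand–FC distances are positive, and let $\rho=\max_{i,j}\ell_{ij}/\min_{i,j}\ell_{ij}$. Then there is a regionalized solution using at most $(2+\lceil\sqrt q\rceil)^q(\lfloor\log_2\rho\rfloor+1)$ regions whose total delay is at most $(4\sqrt q+2)$ times the cost of a minimum cost assignment, and hence at most $(4\sqrt q+2)$ times the minimum delay of any regionalized solution.
   Context: An instance consists of finite sets $\mathcal D$ (demand nodes) and $\mathcal F$ (FCs), finite nonnegative travel times $\ell_{ij}$, demands $D_i\ge0$ and capacities $C_j\ge0$ with $\sum_iD_i\le\sum_jC_j$. An assignment is $x\in\mathbb R_{\ge0}^{\mathcal D\times\mathcal F}$ with $\sum_jx_{ij}=D_i$ for all $i$ and $\sum_ix_{ij}\le C_j$ for all $j$; its cost is $\sum_{ij}\ell_{ij}x_{ij}$. An equilibrium solution is a pair $(x,\beta)$ with $x$ an assignment and $\beta\in\mathbb R^{\mathcal F}_{\ge0}$ such that $x_{ij}>0$ only if $j\in\arg\min_{j'}(\ell_{ij'}+\beta_{j'})$, and $\beta_j=0$ whenever $\sum_ix_{ij}<C_j$; its delay is $\sum_iD_i\delta_i$ with $\delta_i=\min_j(\ell_{ij}+\beta_j)$. An $r$-regionalized solution consists of partitions $\mathcal D=\mathcal D_1\sqcup\dots\sqcup\mathcal D_r$, $\mathcal F=\mathcal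 F_1\sqcup\dots\sqcup\mathcal F_r$ (parts may be empty) with $\sum_{i\in\mathcal D_s}D_i\le\sum_{j\in\mathcal F_s}C_j$ for each $s$, together with an equilibrium solution of each sub-instance $(\mathcal D_s,\mathcal F_s)$; its delay is the sum of the delays of these $r$ equilibrium solutions. *)

theory Defs
  imports "HOL-Analysis.Analysis"
begin

text \<open>Generic instance data: demand nodes DD, FCs FF, travel times l, demands dem,
  capacities cap.  Assignments are functions x i j, only relevant on DD x FF.\<close>

definition is_assignment ::
  "'d set \<Rightarrow> 'f set \<Rightarrow> ('d \<Rightarrow> real) \<Rightarrow> ('f \<Rightarrow> real) \<Rightarrow> ('d \<Rightarrow> 'f \<Rightarrow> real) \<Rightarrow> bool" where
  "is_assignment DD FF dem cap x \<longleftrightarrow>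
     (\<forall>i\<in>DD. \<forall>j\<in>FF. x i j \<ge> 0) \<and>
     (\<forall>i\<in>DD. (\<Sum>j\<in>FF. x i j) = dem i) \<and>
     (\<forall>j\<in>FF. (\<Sum>i\<in>DD. x i j) \<le> cap j)"

definition assignment_cost ::
  "'d set \<Rightarrow> 'f set \<Rightarrow> ('d \<Rightarrow> 'f \<Rightarrow> real) \<Rightarrow> ('d \<Rightarrow> 'f \<Rightarrow> real) \<Rightarrow> real" where
  "assignment_cost DD FF l x = (\<Sum>i\<in>DD. \<Sum>j\<in>FF. l i j * x i j)"

definition is_equilibrium ::
  "'d set \<Rightarrow> 'f set \<Rightarrow> ('d \<Rightarrow> 'f \<Rightarrow> real) \<Rightarrow> ('d \<Rightarrow> real) \<Rightarrow> ('f \<Rightarrow> real)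
    \<Rightarrow> ('d \<Rightarrow> 'f \<Rightarrow> real) \<Rightarrow> ('f \<Rightarrow> real) \<Rightarrow> bool" where
  "is_equilibrium DD FF l dem cap x \<beta> \<longleftrightarrow>
     is_assignment DD FF dem cap x \<and>
     (\<forall>j\<in>FF. \<beta> j \<ge> 0) \<and>
     (\<forall>i\<in>DD. \<forall>j\<in>FF. x i j > 0 \<longrightarrow> (\<forall>j'\<in>FF. l i j + \<beta> j \<le> l i j' + \<beta> j')) \<and>
     (\<forall>j\<in>FF. (\<Sum>i\<in>DD. x i j) < cap j \<longrightarrow> \<beta> j = 0)"

definition eq_delay ::
  "'d set \<Rightarrow> 'f set \<Rightarrow> ('d \<Rightarrow> 'f \<Rightarrow> real) \<Rightarrow> ('d \<Rightarrow> real) \<Rightarrow> ('f \<Rightarrow> real) \<Rightarrow> real" where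
  "eq_delay DD FF l dem \<beta> = (\<Sum>i\<in>DD. dem i * Min ((\<lambda>j. l i j + \<beta> j) ` FF))"

definition is_regionalized ::
  "'d set \<Rightarrow> 'f set \<Rightarrow> ('d \<Rightarrow> 'f \<Rightarrow> real) \<Rightarrow> ('d \<Rightarrow> real) \<Rightarrow> ('f \<Rightarrow> real) \<Rightarrow> nat
    \<Rightarrow> (nat \<Rightarrow> 'd set) \<Rightarrow> (nat \<Rightarrow> 'f set) \<Rightarrow> (nat \<Rightarrow> 'd \<Rightarrow> 'f \<Rightarrow> real) \<Rightarrow> (nat \<Rightarrow> 'f \<Rightarrow> real) \<Rightarrow> bool" where
  "is_regionalized DD FF l dem cap r DP FP x \<beta> \<longleftrightarrow>
     (\<Union>s<r. DP s) = DD \<and> (\<forall>s<r. \<forall>t<r. s \<noteq> t \<longrightarrow> DP s \<inter> DP t = {}) \<and>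
     (\<Union>s<r. FP s) = FF \<and> (\<forall>s<r. \<forall>t<r. s \<noteq> t \<longrightarrow> FP s \<inter> FP t = {}) \<and>
     (\<forall>s<r. (\<Sum>i\<in>DP s. dem i) \<le> (\<Sum>j\<in>FP s. cap j)) \<and>
     (\<forall>s<r. is_equilibrium (DP s) (FP s) l dem cap (x s) (\<beta> s))"

definition regionalized_delay ::
  "'d set \<Rightarrow> 'f set \<Rightarrow> ('d \<Rightarrow> 'f \<Rightarrow> real) \<Rightarrow> ('d \<Rightarrow> real) \<Rightarrow> nat
    \<Rightarrow> (nat \<Rightarrow> 'd set) \<Rightarrow> (nat \<Rightarrow> 'f set) \<Rightarrow> (nat \<Rightarrow> 'f \<Rightarrow> real) \<Rightarrow> real" where
  "regionalized_delay DD FF l dem r DP FP \<beta> = (\<Sum>s<r. eq_delay (DP s) (FP s) l dem (\<beta> s))"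

end

theory Submission
  imports Defs
begin

fun pw :: "('f \<Rightarrow> 'f \<Rightarrow> real) \<Rightarrow> 'f list \<Rightarrow> real" where
  "pw w (a # b # rest) = w a b + pw w (b # rest)"
| "pw w _ = 0"

lemma pw_append: "pw w (xs @ y # ys) = pw w (xs @ [y]) + pw w (y # ys)"
proof (induction xs)
  case Nil then show ?case by simp
next
  case (Cons a xs) then show ?case by (cases xs) auto
qed

lemma pw_nth: "pw w xs = (\<Sum>s<length xs - 1. w (xs ! s) (xs ! Suc s))"
proof (induction w xs rule: pw.induct)
  case (1 w a b rest)
  have "(\<Sum>s<length (a # b # rest) - 1. w ((a # b # rest) ! s) ((a # b # rest) ! Suc s))
      = w a b + (\<Sum>s<length (b # rest) - 1. w ((b # rest) ! s) ((b # rest) ! Suc s))"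
    by (simp add: sum.lessThan_Suc_shift del: sum.lessThan_Suc)
  then show ?case using 1 by simp
qed auto

lemma mod_suc_inj:
  fixes s t k :: nat
  assumes "s < k" "t < k" "Suc s mod k = Suc t mod k"
  shows "s = t"
proof -
  have "Suc s mod k = (if Suc s = k then 0 else Suc s)" "Suc t mod k = (if Suc t = k then 0 else Suc t)"
    using assms(1,2) by auto
  then show ?thesis using assms(3) by (auto split: if_splits)
qed

definition rot :: "(nat \<Rightarrow> 'f) \<Rightarrow> nat \<Rightarrow> 'f \<Rightarrow> 'f" where
  "rot c k j = (if j \<in> c ` {..<k} then c (Suc (inv_into {..<k} c j) mod k) else j)"

lemma rot_c: "inj_on c {..<k} \<Longrightarrow> s < k \<Longrightarrow> rot c k (c s) = c (Suc s mod k)"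
  unfolding rot_def by auto

lemma rot_bij:
  assumes "finite F" "inj_on c {..<k}" "c ` {..<k} \<subseteq> F"
  shows "bij_betw (rot c k) F F"
proof -
  have img: "rot c k ` F \<subseteq> F"
  proof
    fix y assume "y \<in> rot c k ` F"
    then obtain j where j: "j \<in> F" "y = rot c k j" by auto
    show "y \<in> F"
    proof (cases "j \<in> c ` {..<k}")
      case True
      then obtain s where "s < k" "j = c s" by auto
      then have "k > 0" by simp
      then show ?thesis using j \<open>s<k\<close> \<open>j = c s\<close> rot_c[OF assms(2)] assms(3) by auto
    next
      case False then show ?thesis using j by (simp add: rot_def)
    qed
  qed
  have inj: "inj_on (rot c k) F"
  proof (rule inj_onI)
    fix x y assume xy: "x \<in> F" "y \<in> F" "rot c k x = rot c k y"
    show "x = y"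
    proof (cases "x \<in> c ` {..<k}"; cases "y \<in> c ` {..<k}")
      assume "x \<in> c ` {..<k}" "y \<in> c ` {..<k}"
      then obtain s t where st: "s < k" "t < k" "x = c s" "y = c t" by auto
      then have "c (Suc s mod k) = c (Suc t mod k)" using xy rot_c[OF assms(2)] by auto
      moreover have "Suc s mod k < k" "Suc t mod k < k" using st by auto
      ultimately have "Suc s mod k = Suc t mod k" using assms(2) by (auto dest: inj_onD)
      then show ?thesis using mod_suc_inj st by auto
    next
      assume "x \<in> c ` {..<k}" "y \<notin> c ` {..<k}"
      then obtain s where st: "s < k" "x = c s" by auto
      then have "rot c k x \<in> c ` {..<k}" using rot_c[OF assms(2)] by auto
      moreover have "rot c k y = y" using \<open>y \<notin> _\<close> by (simp add: rot_def)
      ultimately show ?thesis using xy \<open>y \<notin> _\<close> by simp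
    next
      assume "x \<notin> c ` {..<k}" "y \<in> c ` {..<k}"
      then obtain s where st: "s < k" "y = c s" by auto
      then have "rot c k y \<in> c ` {..<k}" using rot_c[OF assms(2)] by auto
      moreover have "rot c k x = x" using \<open>x \<notin> _\<close> by (simp add: rot_def)
      ultimately show ?thesis using xy \<open>x \<notin> _\<close> by simp
    next
      assume "x \<notin> c ` {..<k}" "y \<notin> c ` {..<k}"
      then show ?thesis using xy by (simp add: rot_def)
    qed
  qed
  show ?thesis using endo_inj_surj[OF assms(1) img inj] inj by (simp add: bij_betw_def)
qed

definition wt :: "'d set \<Rightarrow> ('d \<Rightarrow> 'f) \<Rightarrow> ('d \<Rightarrow> 'f \<Rightarrow> real) \<Rightarrow> 'f \<Rightarrow> 'f \<Rightarrow> real" where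
  "wt A m l a b = l (inv_into A m a) b - l (inv_into A m a) a"

lemma cycle_nonneg_idx:
  fixes l :: "'d \<Rightarrow> 'f \<Rightarrow> real"
  assumes fin: "finite F" and bij: "bij_betw m A F"
    and opt: "\<forall>\<mu>. bij_betw \<mu> A F \<longrightarrow> (\<Sum>i\<in>A. l i (m i)) \<le> (\<Sum>i\<in>A. l i (\<mu> i))"
    and c: "inj_on c {..<k}" "c ` {..<k} \<subseteq> F"
  shows "0 \<le> (\<Sum>s<k. wt A m l (c s) (c (Suc s mod k)))"
proof -
  let ?\<sigma> = "rot c k"
  have sb: "bij_betw ?\<sigma> F F" using rot_bij[OF fin c] .
  have mb: "bij_betw (?\<sigma> \<circ> m) A F" using bij_betw_trans[OF bij sb] .
  have inv: "\<And>i. i \<in> A \<Longrightarrow> inv_into A m (m i) = i" using bij by (simp add: bij_betw_def)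
  have e1: "(\<Sum>i\<in>A. l i (?\<sigma> (m i))) = (\<Sum>j\<in>F. l (inv_into A m j) (?\<sigma> j))"
  proof -
    have "(\<Sum>i\<in>A. l i (?\<sigma> (m i))) = (\<Sum>i\<in>A. (\<lambda>j. l (inv_into A m j) (?\<sigma> j)) (m i))"
      using inv by simp
    also have "\<dots> = (\<Sum>j\<in>F. l (inv_into A m j) (?\<sigma> j))" using sum.reindex_bij_betw[OF bij] .
    finally show ?thesis .
  qed
  have e2: "(\<Sum>i\<in>A. l i (m i)) = (\<Sum>j\<in>F. l (inv_into A m j) j)"
  proof -
    have "(\<Sum>i\<in>A. l i (m i)) = (\<Sum>i\<in>A. (\<lambda>j. l (inv_into A m j) j) (m i))"
      using inv by simp
    also have "\<dots> = (\<Sum>j\<in>F. l (inv_into A m j) j)" using sum.reindex_bij_betw[OF bij] .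
    finally show ?thesis .
  qed
  have "(\<Sum>i\<in>A. l i (m i)) \<le> (\<Sum>i\<in>A. l i (?\<sigma> (m i)))" using opt[rule_format, OF mb] by simp
  then have "0 \<le> (\<Sum>j\<in>F. wt A m l j (?\<sigma> j))"
    unfolding wt_def using e1 e2 by (simp add: sum_subtractf)
  also have "(\<Sum>j\<in>F. wt A m l j (?\<sigma> j)) = (\<Sum>j\<in>c ` {..<k}. wt A m l j (?\<sigma> j))"
  proof -
    show ?thesis by (rule sum.mono_neutral_right[OF fin c(2)]) (simp add: rot_def wt_def)
  qed
  also have "\<dots> = (\<Sum>s<k. wt A m l (c s) (?\<sigma> (c s)))" by (simp add: sum.reindex[OF c(1)])
  also have "\<dots> = (\<Sum>s<k. wt A m l (c s) (c (Suc s mod k)))" using rot_c[OF c(1)] by simp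
  finally show ?thesis .
qed

lemma cycle_nonneg_list:
  fixes l :: "'d \<Rightarrow> 'f \<Rightarrow> real"
  assumes fin: "finite F" and bij: "bij_betw m A F"
    and opt: "\<forall>\<mu>. bij_betw \<mu> A F \<longrightarrow> (\<Sum>i\<in>A. l i (m i)) \<le> (\<Sum>i\<in>A. l i (\<mu> i))"
    and cs: "distinct cs" "cs \<noteq> []" "set cs \<subseteq> F"
  shows "0 \<le> pw (wt A m l) (cs @ [hd cs])"
proof -
  let ?k = "length cs"
  have inj: "inj_on (nth cs) {..<?k}" using cs(1) by (simp add: inj_on_def nth_eq_iff_index_eq)
  have im: "nth cs ` {..<?k} \<subseteq> F" using cs(3) by auto
  have "pw (wt A m l) (cs @ [hd cs]) = (\<Sum>s<?k. wt A m l ((cs @ [hd cs]) ! s) ((cs @ [hd cs]) ! Suc s))"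
    by (simp add: pw_nth)
  also have "\<dots> = (\<Sum>s<?k. wt A m l (cs ! s) (cs ! (Suc s mod ?k)))"
  proof (rule sum.cong)
    fix s assume "s \<in> {..<?k}"
    then have s: "s < ?k" by simp
    have a: "(cs @ [hd cs]) ! s = cs ! s" using s by (simp add: nth_append)
    have b: "(cs @ [hd cs]) ! Suc s = cs ! (Suc s mod ?k)"
    proof (cases "Suc s < ?k")
      case True then show ?thesis by (simp add: nth_append)
    next
      case False then have "Suc s = ?k" using s by simp
      then show ?thesis using cs(2) by (simp add: nth_append hd_conv_nth)
    qed
    show "wt A m l ((cs @ [hd cs]) ! s) ((cs @ [hd cs]) ! Suc s) = wt A m l (cs ! s) (cs ! (Suc s mod ?k))"
      using a b by simp
  qed simp
  finally show ?thesis using cycle_nonneg_idx[OF fin bij opt inj im] by simp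
qed

definition paths :: "'f set \<Rightarrow> 'f \<Rightarrow> 'f list set" where
  "paths F j = {p. distinct p \<and> set p \<subseteq> F \<and> p \<noteq> [] \<and> hd p = j}"

lemma paths_finite: "finite F \<Longrightarrow> finite (paths F j)"
  by (rule finite_subset[OF _ finite_subset_distinct[of F]]) (auto simp: paths_def)

lemma paths_ne: "j \<in> F \<Longrightarrow> [j] \<in> paths F j"
  by (simp add: paths_def)

lemma potentials:
  fixes l :: "'d \<Rightarrow> 'f \<Rightarrow> real"
  assumes fin: "finite F" and bij: "bij_betw m A F"
    and opt: "\<forall>\<mu>. bij_betw \<mu> A F \<longrightarrow> (\<Sum>i\<in>A. l i (m i)) \<le> (\<Sum>i\<in>A. l i (\<mu> i))"
  shows "\<exists>\<pi>. \<forall>i\<in>A. \<forall>j\<in>F. l i (m i) + \<pi> (m i) \<le> l i j + \<pi> j"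
proof -
  let ?w = "wt A m l"
  define \<pi> where "\<pi> j = Min (pw ?w ` paths F j)" for j
  have tri: "\<pi> a \<le> ?w a b + \<pi> b" if ab: "a \<in> F" "b \<in> F" for a b
  proof -
    have "finite (pw ?w ` paths F b)" "pw ?w ` paths F b \<noteq> {}"
      using paths_finite[OF fin] paths_ne[OF ab(2)] by auto
    then obtain p where p: "p \<in> paths F b" "\<pi> b = pw ?w p"
      unfolding \<pi>_def by (metis (no_types, lifting) Min_in imageE)
    have pa: "pw ?w p' \<ge> \<pi> a" if "p' \<in> paths F a" for p'
      unfolding \<pi>_def using that paths_finite[OF fin] by auto
    show ?thesis
    proof (cases "a \<in> set p")
      case False
      have "a # p \<in> paths F a" using p(1) False ab by (auto simp: paths_def)
      moreover have "pw ?w (a # p) = ?w a b + pw ?w p"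
        using p(1) by (cases p) (auto simp: paths_def)
      ultimately show ?thesis using pa p(2) by fastforce
    next
      case True
      then obtain as bs where sp: "p = as @ a # bs" "a \<notin> set as" by (meson split_list_first)
      show ?thesis
      proof (cases "as = []")
        case True
        then have "a = b" using p(1) sp by (auto simp: paths_def)
        then show ?thesis by (simp add: wt_def)
      next
        case False
        have hd: "hd as = b" using p(1) sp False by (auto simp: paths_def)
        have pd: "distinct p" "set p \<subseteq> F" using p(1) by (auto simp: paths_def)
        have cyc: "0 \<le> pw ?w ((a # as) @ [hd (a # as)])"
          by (rule cycle_nonneg_list[OF fin bij opt]) (use pd sp in auto)
        have "pw ?w ((a # as) @ [hd (a # as)]) = ?w a b + pw ?w (as @ [a])"
          using False hd by (cases as) auto
        moreover have "pw ?w p = pw ?w (as @ [a]) + pw ?w (a # bs)"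
          using sp(1) pw_append by metis
        moreover have "a # bs \<in> paths F a" using pd sp by (auto simp: paths_def)
        ultimately show ?thesis using pa cyc p(2) by fastforce
      qed
    qed
  qed
  show ?thesis
  proof (intro exI ballI)
    fix i j assume ij: "i \<in> A" "j \<in> F"
    have mi: "m i \<in> F" "inv_into A m (m i) = i" using bij ij(1) by (auto simp: bij_betw_def)
    show "l i (m i) + \<pi> (m i) \<le> l i j + \<pi> j"
      using tri[OF mi(1) ij(2)] mi(2) by (simp add: wt_def)
  qed
qed

lemma shifted_potentials:
  fixes l :: "'d \<Rightarrow> 'f \<Rightarrow> real"
  assumes fin: "finite A" and inj: "inj_on m A"
    and opt: "\<forall>\<mu>. bij_betw \<mu> A (m ` A) \<longrightarrow> (\<Sum>i\<in>A. l i (m i)) \<le> (\<Sum>i\<in>A. l i (\<mu> i))"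
  shows "\<exists>\<beta>. (\<forall>j\<in>m ` A. \<beta> j \<ge> 0) \<and> (A \<noteq> {} \<longrightarrow> (\<exists>j0\<in>m ` A. \<beta> j0 = 0)) \<and>
     (\<forall>i\<in>A. \<forall>j\<in>m ` A. l i (m i) + \<beta> (m i) \<le> l i j + \<beta> j)"
proof -
  have bij: "bij_betw m A (m ` A)" using inj by (simp add: bij_betw_def)
  obtain \<pi> where \<pi>: "\<forall>i\<in>A. \<forall>j\<in>m ` A. l i (m i) + \<pi> (m i) \<le> l i j + \<pi> j"
    using potentials[OF finite_imageI[OF fin] bij opt] by blast
  define \<beta> where "\<beta> j = \<pi> j - Min (\<pi> ` m ` A)" for j
  have f: "finite (\<pi> ` m ` A)" using fin by simp
  show ?thesis
  proof (intro exI conjI)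
    show "\<forall>j\<in>m ` A. \<beta> j \<ge> 0" unfolding \<beta>_def using Min_le[OF f] by auto
    show "A \<noteq> {} \<longrightarrow> (\<exists>j0\<in>m ` A. \<beta> j0 = 0)"
    proof
      assume "A \<noteq> {}"
      then have "Min (\<pi> ` m ` A) \<in> \<pi> ` m ` A" using Min_in[OF f] by auto
      then show "\<exists>j0\<in>m ` A. \<beta> j0 = 0" unfolding \<beta>_def by force
    qed
    show "\<forall>i\<in>A. \<forall>j\<in>m ` A. l i (m i) + \<beta> (m i) \<le> l i j + \<beta> j"
      using \<pi> unfolding \<beta>_def by force
  qed
qed

lemma restrict_opt:
  fixes l :: "'d \<Rightarrow> 'f \<Rightarrow> real"
  assumes fin: "finite DD" and inj: "inj_on m DD" and im: "m ` DD \<subseteq> FF"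
    and opt: "\<forall>\<mu>. inj_on \<mu> DD \<and> \<mu> ` DD \<subseteq> FF \<longrightarrow> (\<Sum>i\<in>DD. l i (m i)) \<le> (\<Sum>i\<in>DD. l i (\<mu> i))"
    and A: "A \<subseteq> DD" and mu: "bij_betw \<mu> A (m ` A)"
  shows "(\<Sum>i\<in>A. l i (m i)) \<le> (\<Sum>i\<in>A. l i (\<mu> i))"
proof -
  define \<mu>' where "\<mu>' i = (if i \<in> A then \<mu> i else m i)" for i
  have "inj_on \<mu>' DD"
  proof (rule inj_onI)
    fix a b assume ab: "a \<in> DD" "b \<in> DD" "\<mu>' a = \<mu>' b"
    show "a = b"
    proof (cases "a \<in> A"; cases "b \<in> A")
      assume "a \<in> A" "b \<in> A" then show ?thesis using ab mu by (auto simp: \<mu>'_def bij_betw_def dest: inj_onD)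
    next
      assume "a \<in> A" "b \<notin> A"
      then have "\<mu> a \<in> m ` A" using mu by (auto simp: bij_betw_def)
      then obtain a' where "a' \<in> A" "\<mu> a = m a'" by auto
      then have "m a' = m b" using ab \<open>a \<in> A\<close> \<open>b \<notin> A\<close> by (simp add: \<mu>'_def)
      then have "a' = b" using inj \<open>a' \<in> A\<close> A ab(2) by (auto dest: inj_onD)
      then show ?thesis using \<open>a' \<in> A\<close> \<open>b \<notin> A\<close> by simp
    next
      assume "a \<notin> A" "b \<in> A"
      then have "\<mu> b \<in> m ` A" using mu by (auto simp: bij_betw_def)
      then obtain b' where "b' \<in> A" "\<mu> b = m b'" by auto
      then have "m b' = m a" using ab \<open>b \<in> A\<close> \<open>a \<notin> A\<close> by (simp add: \<mu>'_def)
      then have "b' = a" using inj \<open>b' \<in> A\<close> A ab(1) by (auto dest: inj_onD)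
      then show ?thesis using \<open>b' \<in> A\<close> \<open>a \<notin> A\<close> by simp
    next
      assume "a \<notin> A" "b \<notin> A" then show ?thesis using ab inj by (auto simp: \<mu>'_def dest: inj_onD)
    qed
  qed
  moreover have "\<mu>' ` DD \<subseteq> FF"
  proof
    fix y assume "y \<in> \<mu>' ` DD"
    then obtain a where a: "a \<in> DD" "y = \<mu>' a" by auto
    show "y \<in> FF"
    proof (cases "a \<in> A")
      case True
      then have "\<mu> a \<in> m ` A" using mu by (auto simp: bij_betw_def)
      then show ?thesis using a True im A by (auto simp: \<mu>'_def)
    next
      case False then show ?thesis using a im by (auto simp: \<mu>'_def)
    qed
  qed
  ultimately have le: "(\<Sum>i\<in>DD. l i (m i)) \<le> (\<Sum>i\<in>DD. l i (\<mu>' i))" using opt by blast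
  have s1: "(\<Sum>i\<in>DD. l i (m i)) = (\<Sum>i\<in>DD - A. l i (m i)) + (\<Sum>i\<in>A. l i (m i))"
    using sum.subset_diff[OF A fin] .
  have s2: "(\<Sum>i\<in>DD. l i (\<mu>' i)) = (\<Sum>i\<in>DD - A. l i (\<mu>' i)) + (\<Sum>i\<in>A. l i (\<mu>' i))"
    using sum.subset_diff[OF A fin] .
  have s3: "(\<Sum>i\<in>DD - A. l i (\<mu>' i)) = (\<Sum>i\<in>DD - A. l i (m i))" by (simp add: \<mu>'_def)
  have s4: "(\<Sum>i\<in>A. l i (\<mu>' i)) = (\<Sum>i\<in>A. l i (\<mu> i))" by (simp add: \<mu>'_def)
  show ?thesis using le s1 s2 s3 s4 by linarith
qed

lemma region_eq:
  fixes l :: "'d \<Rightarrow> 'f \<Rightarrow> real" and key :: "'d \<Rightarrow> 'k" and B :: "'d \<Rightarrow> real"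
  assumes fin: "finite S" and inj: "inj_on m S"
    and opt: "\<forall>A\<subseteq>S. \<forall>\<mu>. bij_betw \<mu> A (m ` A) \<longrightarrow> (\<Sum>i\<in>A. l i (m i)) \<le> (\<Sum>i\<in>A. l i (\<mu> i))"
    and intra: "\<forall>i\<in>S. \<forall>i'\<in>S. key i = key i' \<longrightarrow> l i (m i') \<le> B i"
    and cross: "\<forall>i\<in>S. \<forall>i'\<in>S. key i \<noteq> key i' \<longrightarrow> B i \<le> l i (m i')"
  shows "\<exists>x \<beta>. is_equilibrium S (m ` S) l (\<lambda>_. 1) (\<lambda>_. 1) x \<beta> \<and>
           eq_delay S (m ` S) l (\<lambda>_. 1) \<beta> \<le> (\<Sum>i\<in>S. B i)"
proof -
  define G where "G \<kappa> = {i\<in>S. key i = \<kappa>}" for \<kappa>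
  define Q where "Q \<kappa> \<beta> \<longleftrightarrow> (\<forall>j\<in>m ` G \<kappa>. \<beta> j \<ge> 0) \<and> (G \<kappa> \<noteq> {} \<longrightarrow> (\<exists>j0\<in>m ` G \<kappa>. \<beta> j0 = 0)) \<and>
     (\<forall>i\<in>G \<kappa>. \<forall>j\<in>m ` G \<kappa>. l i (m i) + \<beta> (m i) \<le> l i j + \<beta> j)" for \<kappa> and \<beta> :: "'f \<Rightarrow> real"
  have "\<forall>\<kappa>. \<exists>\<beta>. Q \<kappa> \<beta>"
  proof
    fix \<kappa>
    have sub: "G \<kappa> \<subseteq> S" by (auto simp: G_def)
    show "\<exists>\<beta>. Q \<kappa> \<beta>" unfolding Q_def
      by (rule shifted_potentials) (use sub fin inj opt in \<open>auto intro: finite_subset inj_on_subset\<close>)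
  qed
  then obtain P where P: "\<And>\<kappa>. Q \<kappa> (P \<kappa>)" by metis
  define \<beta> where "\<beta> j = P (key (inv_into S m j)) j" for j
  define x where "x i j = (if j = m i then 1 else (0::real))" for i j
  have invm: "\<And>i. i \<in> S \<Longrightarrow> inv_into S m (m i) = i" using inj by simp
  have \<beta>m: "\<And>i. i \<in> S \<Longrightarrow> \<beta> (m i) = P (key i) (m i)" using invm by (simp add: \<beta>_def)
  have inG: "\<And>i. i \<in> S \<Longrightarrow> i \<in> G (key i)" by (simp add: G_def)
  have delta: "l i (m i) + \<beta> (m i) \<le> B i" if i: "i \<in> S" for i
  proof -
    have "G (key i) \<noteq> {}" using inG[OF i] by auto
    then obtain j0 where j0: "j0 \<in> m ` G (key i)" "P (key i) j0 = 0" using P[of "key i"] unfolding Q_def by blast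
    then obtain i0 where i0: "i0 \<in> G (key i)" "j0 = m i0" by auto
    have "l i (m i) + \<beta> (m i) \<le> l i j0 + P (key i) j0"
      using P[of "key i"] inG[OF i] j0(1) \<beta>m[OF i] unfolding Q_def by auto
    also have "\<dots> = l i (m i0)" using j0 i0 by simp
    also have "\<dots> \<le> B i" using intra i i0(1) by (auto simp: G_def)
    finally show ?thesis .
  qed
  have load: "(\<Sum>i\<in>S. x i j) = 1" if j: "j \<in> m ` S" for j
  proof -
    obtain i0 where i0: "i0 \<in> S" "j = m i0" using j by auto
    have "(\<Sum>i\<in>S. x i j) = (\<Sum>i\<in>S. if i = i0 then 1 else 0)"
      using i0 inj by (intro sum.cong) (auto simp: x_def dest: inj_onD)
    also have "\<dots> = 1" using fin i0(1) by simp
    finally show ?thesis .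
  qed
  have eq: "is_equilibrium S (m ` S) l (\<lambda>_. 1) (\<lambda>_. 1) x \<beta>"
    unfolding is_equilibrium_def is_assignment_def
  proof (intro conjI ballI impI)
    fix i j assume "i \<in> S" "j \<in> m ` S" then show "0 \<le> x i j" by (simp add: x_def)
  next
    fix i assume i: "i \<in> S"
    have "(\<Sum>j\<in>m ` S. x i j) = (\<Sum>j\<in>m ` S. if j = m i then 1 else 0)" by (simp add: x_def)
    also have "\<dots> = 1" using fin i by simp
    finally show "(\<Sum>j\<in>m ` S. x i j) = 1" .
  next
    fix j assume "j \<in> m ` S" then show "(\<Sum>i\<in>S. x i j) \<le> 1" using load by simp
  next
    fix j assume "j \<in> m ` S"
    then obtain i' where i': "i' \<in> S" "j = m i'" by auto
    then show "0 \<le> \<beta> j" using \<beta>m[OF i'(1)] P[of "key i'"] inG[OF i'(1)] unfolding Q_def by auto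
  next
    fix j assume "j \<in> m ` S" "(\<Sum>i\<in>S. x i j) < 1" then show "\<beta> j = 0" using load by simp
  next
    fix i j j' assume ij: "i \<in> S" "j \<in> m ` S" "0 < x i j" "j' \<in> m ` S"
    then have jm: "j = m i" by (simp add: x_def split: if_splits)
    obtain i' where i': "i' \<in> S" "j' = m i'" using ij(4) by auto
    show "l i j + \<beta> j \<le> l i j' + \<beta> j'"
    proof (cases "key i' = key i")
      case True
      then have "i' \<in> G (key i)" using inG[OF i'(1)] by simp
      then show ?thesis using P[of "key i"] inG[OF ij(1)] \<beta>m[OF ij(1)] \<beta>m[OF i'(1)] True jm i'(2)
        unfolding Q_def by auto
    next
      case False
      have "0 \<le> \<beta> j'" using \<beta>m[OF i'(1)] P[of "key i'"] inG[OF i'(1)] i'(2) unfolding Q_def by auto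
      moreover have "B i \<le> l i j'" using cross ij(1) i' False by auto
      ultimately show ?thesis using delta[OF ij(1)] unfolding jm by linarith
    qed
  qed
  have "eq_delay S (m ` S) l (\<lambda>_. 1) \<beta> \<le> (\<Sum>i\<in>S. B i)"
    unfolding eq_delay_def
  proof (rule sum_mono)
    fix i assume i: "i \<in> S"
    have "Min ((\<lambda>j. l i j + \<beta> j) ` m ` S) \<le> l i (m i) + \<beta> (m i)"
      using fin i by (intro Min_le) auto
    then show "1 * Min ((\<lambda>j. l i j + \<beta> j) ` m ` S) \<le> B i" using delta[OF i] by simp
  qed
  then show ?thesis using eq by blast
qed

lemma lower_bound:
  fixes l :: "'d \<Rightarrow> 'f \<Rightarrow> real"
  assumes finD: "finite DD" and finF: "finite FF" and inj: "inj_on m DD" and im: "m ` DD \<subseteq> FF"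
    and opt: "\<forall>\<mu>. inj_on \<mu> DD \<and> \<mu> ` DD \<subseteq> FF \<longrightarrow> (\<Sum>i\<in>DD. l i (m i)) \<le> (\<Sum>i\<in>DD. l i (\<mu> i))"
    and y: "is_assignment DD FF (\<lambda>_. 1) (\<lambda>_. 1) y"
  shows "(\<Sum>i\<in>DD. l i (m i)) \<le> assignment_cost DD FF l y"
proof -
  define D' where "D' = Inl ` DD \<union> Inr ` (FF - m ` DD)"
  define m' where "m' = case_sum m id"
  define l' :: "'d + 'f \<Rightarrow> 'f \<Rightarrow> real" where "l' d j = (case d of Inl i \<Rightarrow> l i j | Inr _ \<Rightarrow> 0)" for d j
  have finD': "finite D'" using finD finF by (simp add: D'_def)
  have sumD': "(\<Sum>d\<in>D'. l' d (g d)) = (\<Sum>i\<in>DD. l i (g (Inl i)))" for g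
  proof -
    have "(\<Sum>d\<in>D'. l' d (g d)) = (\<Sum>d\<in>Inl ` DD. l' d (g d)) + (\<Sum>d\<in>Inr ` (FF - m ` DD). l' d (g d))"
      unfolding D'_def using finD finF by (intro sum.union_disjoint) auto
    also have "(\<Sum>d\<in>Inr ` (FF - m ` DD). l' d (g d)) = 0" by (intro sum.neutral) (auto simp: l'_def)
    also have "(\<Sum>d\<in>Inl ` DD. l' d (g d)) = (\<Sum>i\<in>DD. l i (g (Inl i)))"
      by (simp add: sum.reindex l'_def)
    finally show ?thesis by simp
  qed
  have bij: "bij_betw m' D' FF"
    unfolding bij_betw_def
  proof
    show "inj_on m' D'"
    proof (rule inj_onI)
      fix a b assume ab: "a \<in> D'" "b \<in> D'" "m' a = m' b"
      show "a = b"
      proof (cases a; cases b)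
        fix i i' assume "a = Inl i" "b = Inl i'"
        then show ?thesis using ab inj by (auto simp: D'_def m'_def dest: inj_onD)
      next
        fix i j assume "a = Inl i" "b = Inr j"
        then show ?thesis using ab by (auto simp: D'_def m'_def)
      next
        fix i j assume "a = Inr j" "b = Inl i"
        then show ?thesis using ab by (auto simp: D'_def m'_def)
      next
        fix j j' assume "a = Inr j" "b = Inr j'"
        then show ?thesis using ab by (auto simp: D'_def m'_def)
      qed
    qed
    have "m' ` D' = m ` DD \<union> (FF - m ` DD)"
      unfolding D'_def m'_def image_Un image_image by simp
    then show "m' ` D' = FF" using im by auto
  qed
  have opt': "\<forall>\<mu>. bij_betw \<mu> D' FF \<longrightarrow> (\<Sum>d\<in>D'. l' d (m' d)) \<le> (\<Sum>d\<in>D'. l' d (\<mu> d))"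
  proof (intro allI impI)
    fix \<mu> assume mu: "bij_betw \<mu> D' FF"
    have "inj_on (\<lambda>i. \<mu> (Inl i)) DD" using mu unfolding bij_betw_def D'_def
      by (auto simp: inj_on_def)
    moreover have "(\<lambda>i. \<mu> (Inl i)) ` DD \<subseteq> FF" using mu unfolding bij_betw_def D'_def by auto
    ultimately have "(\<Sum>i\<in>DD. l i (m i)) \<le> (\<Sum>i\<in>DD. l i (\<mu> (Inl i)))" using opt by blast
    then show "(\<Sum>d\<in>D'. l' d (m' d)) \<le> (\<Sum>d\<in>D'. l' d (\<mu> d))"
      using sumD'[of m'] sumD'[of \<mu>] by (simp add: m'_def)
  qed
  obtain \<pi> where \<pi>: "\<forall>d\<in>D'. \<forall>j\<in>FF. l' d (m' d) + \<pi> (m' d) \<le> l' d j + \<pi> j"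
    using potentials[OF finF bij opt'] by blast
  define \<beta> where "\<beta> j = \<pi> j - Min (\<pi> ` FF)" for j
  have fF: "finite (\<pi> ` FF)" using finF by simp
  have \<beta>0: "\<forall>j\<in>FF. \<beta> j \<ge> 0" unfolding \<beta>_def using Min_le[OF fF] by auto
  have \<beta>un: "\<beta> j = 0" if j: "j \<in> FF - m ` DD" for j
  proof -
    have "Inr j \<in> D'" using j by (simp add: D'_def)
    have "\<pi> j \<le> \<pi> j'" if "j' \<in> FF" for j'
    proof -
      have "l' (Inr j) (m' (Inr j)) + \<pi> (m' (Inr j)) \<le> l' (Inr j) j' + \<pi> j'"
        using \<pi> \<open>Inr j \<in> D'\<close> that by blast
      then show ?thesis by (simp add: l'_def m'_def)
    qed
    then have "\<forall>j'\<in>FF. \<pi> j \<le> \<pi> j'" by blast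
    then have "\<pi> j \<le> Min (\<pi> ` FF)" using j fF by (auto intro: Min.boundedI)
    moreover have "Min (\<pi> ` FF) \<le> \<pi> j" using j Min_le[OF fF] by auto
    ultimately show ?thesis by (simp add: \<beta>_def)
  qed
  have ineq: "l i (m i) + \<beta> (m i) \<le> l i j + \<beta> j" if "i \<in> DD" "j \<in> FF" for i j
  proof -
    have "Inl i \<in> D'" using that by (simp add: D'_def)
    then have "l' (Inl i) (m' (Inl i)) + \<pi> (m' (Inl i)) \<le> l' (Inl i) j + \<pi> j"
      using \<pi> that by blast
    then show ?thesis unfolding \<beta>_def by (simp add: l'_def m'_def)
  qed
  have ynn: "\<forall>i\<in>DD. \<forall>j\<in>FF. y i j \<ge> 0" and ysum: "\<forall>i\<in>DD. (\<Sum>j\<in>FF. y i j) = 1"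
    and yload: "\<forall>j\<in>FF. (\<Sum>i\<in>DD. y i j) \<le> 1" using y by (auto simp: is_assignment_def)
  define a where "a i = l i (m i) + \<beta> (m i)" for i
  have "(\<Sum>i\<in>DD. \<Sum>j\<in>FF. (a i - \<beta> j) * y i j) \<le> (\<Sum>i\<in>DD. \<Sum>j\<in>FF. l i j * y i j)"
    using ynn unfolding a_def by (intro sum_mono mult_right_mono) (auto simp: algebra_simps dest: ineq)
  moreover have "(\<Sum>i\<in>DD. \<Sum>j\<in>FF. (a i - \<beta> j) * y i j)
      = (\<Sum>i\<in>DD. a i * (\<Sum>j\<in>FF. y i j)) - (\<Sum>i\<in>DD. \<Sum>j\<in>FF. \<beta> j * y i j)"
    by (simp add: left_diff_distrib sum_subtractf sum_distrib_left)
  moreover have "(\<Sum>i\<in>DD. a i * (\<Sum>j\<in>FF. y i j)) = (\<Sum>i\<in>DD. a i)" using ysum by simp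
  moreover have "(\<Sum>i\<in>DD. \<Sum>j\<in>FF. \<beta> j * y i j) = (\<Sum>j\<in>FF. \<beta> j * (\<Sum>i\<in>DD. y i j))"
    by (simp add: sum.swap[of _ DD] sum_distrib_left)
  moreover have "(\<Sum>j\<in>FF. \<beta> j * (\<Sum>i\<in>DD. y i j)) \<le> (\<Sum>j\<in>FF. \<beta> j)"
    using \<beta>0 yload by (intro sum_mono) (simp add: mult_left_le)
  moreover have "(\<Sum>i\<in>DD. a i) = (\<Sum>i\<in>DD. l i (m i)) + (\<Sum>i\<in>DD. \<beta> (m i))"
    by (simp add: a_def sum.distrib)
  moreover have "(\<Sum>i\<in>DD. \<beta> (m i)) = (\<Sum>j\<in>FF. \<beta> j)"
  proof -
    have "(\<Sum>i\<in>DD. \<beta> (m i)) = (\<Sum>j\<in>m ` DD. \<beta> j)" by (simp add: sum.reindex[OF inj])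
    also have "\<dots> = (\<Sum>j\<in>FF. \<beta> j)"
      using \<beta>un by (intro sum.mono_neutral_left[OF finF im]) auto
    finally show ?thesis .
  qed
  ultimately show ?thesis unfolding assignment_cost_def by linarith
qed

lemma eq_lower:
  fixes l :: "'d \<Rightarrow> 'f \<Rightarrow> real"
  assumes eq: "is_equilibrium S T l (\<lambda>_. 1) (\<lambda>_. 1) x \<beta>" and finT: "finite T"
  shows "(\<Sum>i\<in>S. \<Sum>j\<in>T. l i j * x i j) \<le> eq_delay S T l (\<lambda>_. 1) \<beta>"
  unfolding eq_delay_def
proof (rule sum_mono)
  fix i assume i: "i \<in> S"
  have xnn: "\<forall>j\<in>T. x i j \<ge> 0" and xs: "(\<Sum>j\<in>T. x i j) = 1" and b0: "\<forall>j\<in>T. \<beta> j \<ge> 0"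
    and opt: "\<forall>j\<in>T. x i j > 0 \<longrightarrow> (\<forall>j'\<in>T. l i j + \<beta> j \<le> l i j' + \<beta> j')"
    using eq i by (auto simp: is_equilibrium_def is_assignment_def)
  let ?M = "Min ((\<lambda>j. l i j + \<beta> j) ` T)"
  have fM: "finite ((\<lambda>j. l i j + \<beta> j) ` T)" using finT by simp
  have e: "x i j * (l i j + \<beta> j) = x i j * ?M" if j: "j \<in> T" for j
  proof (cases "x i j > 0")
    case True
    have "?M \<le> l i j + \<beta> j" using fM j by (intro Min_le) auto
    moreover have "l i j + \<beta> j \<le> ?M" using opt True j fM by (intro Min.boundedI) auto
    ultimately show ?thesis by simp
  next
    case False then have "x i j = 0" using xnn j by force
    then show ?thesis by simp
  qed
  have "(\<Sum>j\<in>T. l i j * x i j) \<le> (\<Sum>j\<in>T. x i j * (l i j + \<beta> j))"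
    using xnn b0 by (intro sum_mono) (simp add: algebra_simps)
  also have "\<dots> = (\<Sum>j\<in>T. x i j * ?M)" using e by (intro sum.cong) auto
  also have "\<dots> = ?M" using xs by (simp add: sum_distrib_right[symmetric])
  finally show "(\<Sum>j\<in>T. l i j * x i j) \<le> 1 * ?M" by simp
qed

lemma unique_region:
  fixes r :: nat
  assumes "\<forall>s<r. \<forall>t<r. s \<noteq> t \<longrightarrow> P s \<inter> P t = {}" "s0 < r" "a \<in> P s0"
  shows "(\<Sum>s<r. if a \<in> P s then (c::real) else 0) = c"
proof -
  have "(\<Sum>s<r. if a \<in> P s then c else 0) = (\<Sum>s<r. if s = s0 then c else 0)"
    using assms by (intro sum.cong) auto
  also have "\<dots> = c" using assms(2) by (simp add: sum.delta)
  finally show ?thesis .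
qed

lemma reg_lower:
  fixes l :: "'d \<Rightarrow> 'f \<Rightarrow> real"
  assumes finD: "finite DD" and finF: "finite FF"
    and R: "is_regionalized DD FF l (\<lambda>_. 1) (\<lambda>_. 1) r DP FP x \<beta>"
  shows "\<exists>y. is_assignment DD FF (\<lambda>_. 1) (\<lambda>_. 1) y \<and>
      assignment_cost DD FF l y \<le> regionalized_delay DD FF l (\<lambda>_. 1) r DP FP \<beta>"
proof -
  have UD: "(\<Union>s<r. DP s) = DD" and dD: "\<forall>s<r. \<forall>t<r. s \<noteq> t \<longrightarrow> DP s \<inter> DP t = {}"
    and UF: "(\<Union>s<r. FP s) = FF" and dF: "\<forall>s<r. \<forall>t<r. s \<noteq> t \<longrightarrow> FP s \<inter> FP t = {}"
    and EQ: "\<forall>s<r. is_equilibrium (DP s) (FP s) l (\<lambda>_. 1) (\<lambda>_. 1) (x s) (\<beta> s)"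
    using R by (auto simp: is_regionalized_def)
  have subD: "\<And>s. s < r \<Longrightarrow> DP s \<subseteq> DD" and subF: "\<And>s. s < r \<Longrightarrow> FP s \<subseteq> FF"
    using UD UF by auto
  have finDs: "\<And>s. s < r \<Longrightarrow> finite (DP s)" using subD finD finite_subset by blast
  have finFs: "\<And>s. s < r \<Longrightarrow> finite (FP s)" using subF finF finite_subset by blast
  define y where "y i j = (\<Sum>s<r. if i \<in> DP s \<and> j \<in> FP s then x s i j else 0)" for i j
  have innerF: "(\<Sum>j\<in>FF. if i \<in> DP s \<and> j \<in> FP s then g j else 0) = (if i \<in> DP s then (\<Sum>j\<in>FP s. g j) else 0)"
    if "s < r" for s i and g :: "'f \<Rightarrow> real"
  proof -
    have "(\<Sum>j\<in>FF. if i \<in> DP s \<and> j \<in> FP s then g j else 0) = (if i \<in> DP s then (\<Sum>j\<in>FF. if j \<in> FP s then g j else 0) else 0)"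
      by simp
    also have "(\<Sum>j\<in>FF. if j \<in> FP s then g j else 0) = (\<Sum>j\<in>FF \<inter> FP s. g j)"
      using sum.inter_restrict[OF finF] by metis
    also have "FF \<inter> FP s = FP s" using subF[OF that] by blast
    finally show ?thesis .
  qed
  have innerD: "(\<Sum>i\<in>DD. if i \<in> DP s \<and> j \<in> FP s then g i else 0) = (if j \<in> FP s then (\<Sum>i\<in>DP s. g i) else 0)"
    if "s < r" for s j and g :: "'d \<Rightarrow> real"
  proof -
    have "(\<Sum>i\<in>DD. if i \<in> DP s \<and> j \<in> FP s then g i else 0) = (if j \<in> FP s then (\<Sum>i\<in>DD. if i \<in> DP s then g i else 0) else 0)"
      by (simp add: conj_commute)
    also have "(\<Sum>i\<in>DD. if i \<in> DP s then g i else 0) = (\<Sum>i\<in>DD \<inter> DP s. g i)"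
      using sum.inter_restrict[OF finD] by metis
    also have "DD \<inter> DP s = DP s" using subD[OF that] by blast
    finally show ?thesis .
  qed
  have asg: "is_assignment DD FF (\<lambda>_. 1) (\<lambda>_. 1) y"
    unfolding is_assignment_def
  proof (intro conjI ballI)
    fix i j assume ij: "i \<in> DD" "j \<in> FF"
    show "0 \<le> y i j" unfolding y_def
      using EQ by (intro sum_nonneg) (auto simp: is_equilibrium_def is_assignment_def)
  next
    fix i assume i: "i \<in> DD"
    then obtain s0 where s0: "s0 < r" "i \<in> DP s0" using UD by auto
    have "(\<Sum>j\<in>FF. y i j) = (\<Sum>s<r. \<Sum>j\<in>FF. if i \<in> DP s \<and> j \<in> FP s then x s i j else 0)"
      unfolding y_def by (rule sum.swap)
    also have "\<dots> = (\<Sum>s<r. if i \<in> DP s then (\<Sum>j\<in>FP s. x s i j) else 0)"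
      using innerF by (intro sum.cong) auto
    also have "\<dots> = (\<Sum>s<r. if i \<in> DP s then 1 else 0)"
      using EQ by (intro sum.cong) (auto simp: is_equilibrium_def is_assignment_def)
    also have "\<dots> = 1" using unique_region[OF dD s0] .
    finally show "(\<Sum>j\<in>FF. y i j) = 1" .
  next
    fix j assume j: "j \<in> FF"
    then obtain s0 where s0: "s0 < r" "j \<in> FP s0" using UF by auto
    have "(\<Sum>i\<in>DD. y i j) = (\<Sum>s<r. \<Sum>i\<in>DD. if i \<in> DP s \<and> j \<in> FP s then x s i j else 0)"
      unfolding y_def by (rule sum.swap)
    also have "\<dots> = (\<Sum>s<r. if j \<in> FP s then (\<Sum>i\<in>DP s. x s i j) else 0)"
      using innerD by (intro sum.cong) auto
    also have "\<dots> \<le> (\<Sum>s<r. if j \<in> FP s then 1 else 0)"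
      using EQ by (intro sum_mono) (auto simp: is_equilibrium_def is_assignment_def)
    also have "\<dots> = 1" using unique_region[OF dF s0] .
    finally show "(\<Sum>i\<in>DD. y i j) \<le> 1" .
  qed
  have "assignment_cost DD FF l y = (\<Sum>i\<in>DD. \<Sum>j\<in>FF. \<Sum>s<r. if i \<in> DP s \<and> j \<in> FP s then l i j * x s i j else 0)"
    unfolding assignment_cost_def y_def sum_distrib_left by (intro sum.cong refl) simp
  also have "\<dots> = (\<Sum>i\<in>DD. \<Sum>s<r. \<Sum>j\<in>FF. if i \<in> DP s \<and> j \<in> FP s then l i j * x s i j else 0)"
    by (intro sum.cong refl) (rule sum.swap)
  also have "\<dots> = (\<Sum>s<r. \<Sum>i\<in>DD. \<Sum>j\<in>FF. if i \<in> DP s \<and> j \<in> FP s then l i j * x s i j else 0)"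
    by (rule sum.swap)
  also have "\<dots> = (\<Sum>s<r. \<Sum>i\<in>DD. if i \<in> DP s then (\<Sum>j\<in>FP s. l i j * x s i j) else 0)"
    by (intro sum.cong refl) (simp add: innerF)
  also have "\<dots> = (\<Sum>s<r. \<Sum>i\<in>DP s. \<Sum>j\<in>FP s. l i j * x s i j)"
  proof (rule sum.cong)
    fix s assume "s \<in> {..<r}"
    then have "DD \<inter> DP s = DP s" using subD by blast
    then show "(\<Sum>i\<in>DD. if i \<in> DP s then (\<Sum>j\<in>FP s. l i j * x s i j) else 0) = (\<Sum>i\<in>DP s. \<Sum>j\<in>FP s. l i j * x s i j)"
      using sum.inter_restrict[OF finD, of "\<lambda>i. \<Sum>j\<in>FP s. l i j * x s i j" "DP s"] by simp
  qed simp
  also have "\<dots> \<le> (\<Sum>s<r. eq_delay (DP s) (FP s) l (\<lambda>_. 1) (\<beta> s))"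
    using EQ finFs by (intro sum_mono eq_lower) auto
  finally show ?thesis using asg unfolding regionalized_delay_def by blast
qed

lemma same_cube_dist:
  fixes x y :: "real ^ 'q"
  assumes a: "a > 0" and eq: "\<forall>t. \<lfloor>x $ t / a\<rfloor> = \<lfloor>y $ t / a\<rfloor>"
  shows "dist x y \<le> sqrt (real CARD('q)) * a"
proof -
  have comp: "dist (x $ t) (y $ t) \<le> a" for t
  proof -
    have "\<lfloor>x $ t / a\<rfloor> = \<lfloor>y $ t / a\<rfloor>" using eq by simp
    then have "\<bar>x $ t / a - y $ t / a\<bar> < 1"
      by (smt (verit, best) floor_eq_iff)
    then have "\<bar>x $ t - y $ t\<bar> < a" using a by (simp add: diff_divide_distrib[symmetric] abs_divide field_simps)
    then show ?thesis by (simp add: dist_real_def)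
  qed
  have "dist x y = L2_set (\<lambda>t. dist (x $ t) (y $ t)) UNIV" by (simp add: dist_vec_def)
  also have "\<dots> \<le> L2_set (\<lambda>t. a) (UNIV :: 'q set)" unfolding L2_set_def
    apply (rule real_sqrt_le_mono)
    apply (rule sum_mono)
    apply (rule power_mono)
    using comp by auto
  also have "\<dots> = sqrt (real CARD('q) * a\<^sup>2)" by (simp add: L2_set_def)
  also have "\<dots> = sqrt (real CARD('q)) * a" using a by (simp add: real_sqrt_mult)
  finally show ?thesis .
qed

lemma diff_cube_dist:
  fixes u v a :: real and c :: int
  assumes a: "a > 0" and c: "c > 0" and ne: "\<lfloor>u / a\<rfloor> \<noteq> \<lfloor>v / a\<rfloor>"
    and md: "\<lfloor>u / a\<rfloor> mod c = \<lfloor>v / a\<rfloor> mod c"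
  shows "\<bar>u - v\<bar> > (c - 1) * a"
proof -
  let ?z = "\<lfloor>u / a\<rfloor>" and ?z' = "\<lfloor>v / a\<rfloor>"
  have "c dvd (?z - ?z')" using md by (simp add: mod_eq_dvd_iff)
  then obtain t where t: "?z - ?z' = c * t" by (auto elim: dvdE)
  have "t \<noteq> 0" using t ne by auto
  then have "\<bar>?z - ?z'\<bar> \<ge> c" using t c by (simp add: abs_mult)
  then have zz: "?z - ?z' \<ge> c \<or> ?z' - ?z \<ge> c" by linarith
  have b1: "real_of_int ?z \<le> u / a" "u / a < real_of_int ?z + 1" by linarith+
  have b2: "real_of_int ?z' \<le> v / a" "v / a < real_of_int ?z' + 1" by linarith+
  have "\<bar>u / a - v / a\<bar> > c - 1"
  proof (cases "?z - ?z' \<ge> c")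
    case True
    then have "real_of_int (?z - ?z') \<ge> real_of_int c" by linarith
    then have "u / a - v / a > c - 1" using b1 b2 by linarith
    then show ?thesis using abs_ge_self[of "u / a - v / a"] by linarith
  next
    case False
    then have "real_of_int (?z' - ?z) \<ge> real_of_int c" using zz by linarith
    then have "v / a - u / a > c - 1" using b1 b2 by linarith
    then show ?thesis using abs_ge_minus_self[of "u / a - v / a"] by linarith
  qed
  then have "\<bar>u - v\<bar> / a > c - 1" using a by (simp add: diff_divide_distrib[symmetric] abs_divide)
  then show ?thesis using a by (simp add: field_simps)
qed

lemma log_floor_bounds:
  fixes x :: real
  assumes "x \<ge> 1"
  shows "2 ^ nat \<lfloor>log 2 x\<rfloor> \<le> x \<and> x < 2 ^ (nat \<lfloor>log 2 x\<rfloor> + 1)"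
proof -
  let ?k = "\<lfloor>log 2 x\<rfloor>"
  have k0: "?k \<ge> 0" using assms by simp
  have "2 powr ?k \<le> x \<and> x < 2 powr (?k + 1)"
    using floor_log_eq_powr_iff[of x 2 ?k] assms by simp
  moreover have "real_of_int ?k = real (nat ?k)" using k0 by simp
  then have "(2::real) powr ?k = 2 ^ nat ?k" by (simp add: powr_realpow)
  moreover have "real_of_int (?k + 1) = real (nat ?k + 1)" using k0 by simp
  then have "(2::real) powr (?k + 1) = 2 ^ (nat ?k + 1)" by (metis powr_realpow zero_less_numeral)
  ultimately show ?thesis by simp
qed

lemma log_floor_mono:
  fixes x y :: real
  assumes "1 \<le> x" "x \<le> y"
  shows "nat \<lfloor>log 2 x\<rfloor> \<le> nat \<lfloor>log 2 y\<rfloor>"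
proof -
  have "log 2 x \<le> log 2 y" using assms by simp
  then show ?thesis by (intro nat_mono floor_mono)
qed

theorem corollary5p3:
  fixes DD FF :: "(real ^ 'q) set"
  defines "l \<equiv> (\<lambda>(i::real ^ 'q) (j::real ^ 'q). dist i j)"
    and "dem \<equiv> (\<lambda>_::real ^ 'q. 1::real)"
    and "cap \<equiv> (\<lambda>_::real ^ 'q. 1::real)"
    and "q \<equiv> CARD('q)"
  assumes "finite DD" and "finite FF" and "DD \<noteq> {}"
    and "card DD \<le> card FF"
    and "\<forall>i\<in>DD. \<forall>j\<in>FF. l i j > 0"
  defines "\<rho> \<equiv> Max {l i j | i j. i \<in> DD \<and> j \<in> FF} / Min {l i j | i j. i \<in> DD \<and> j \<in> FF}"
  shows "\<exists>r DP FP x \<beta>.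
      is_regionalized DD FF l dem cap r DP FP x \<beta> \<and>
      int r \<le> (2 + \<lceil>sqrt (real q)\<rceil>) ^ q * (\<lfloor>log 2 \<rho>\<rfloor> + 1) \<and>
      (\<forall>y. is_assignment DD FF dem cap y \<longrightarrow>
         regionalized_delay DD FF l dem r DP FP \<beta> \<le> (4 * sqrt (real q) + 2) * assignment_cost DD FF l y) \<and>
      (\<forall>r' DP' FP' x' \<beta>'. is_regionalized DD FF l dem cap r' DP' FP' x' \<beta>' \<longrightarrow>
         regionalized_delay DD FF l dem r DP FP \<beta> \<le> (4 * sqrt (real q) + 2) * regionalized_delay DD FF l dem r' DP' FP' \<beta>')"
proof -
  note finD = \<open>finite DD\<close> and finF = \<open>finite FF\<close> and neD = \<open>DD \<noteq> {}\<close>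
    and cardle = \<open>card DD \<le> card FF\<close> and pos = \<open>\<forall>i\<in>DD. \<forall>j\<in>FF. l i j > 0\<close>
  have dem1: "dem = (\<lambda>_. 1)" by (simp add: dem_def)
  have cap1: "cap = (\<lambda>_. 1)" by (simp add: cap_def)
  have ldist: "\<And>i j. l i j = dist i j" by (simp add: l_def)
  have FFne: "FF \<noteq> {}"
  proof
    assume "FF = {}"
    then have "card DD = 0" using cardle by simp
    then show False using finD neD by simp
  qed
  define cost where "cost \<mu> = (\<Sum>i\<in>DD. l i (\<mu> i))" for \<mu>
  define Inj where "Inj = {\<mu> \<in> PiE DD (\<lambda>_. FF). inj_on \<mu> DD}"
  have finInj: "finite Inj" unfolding Inj_def using finite_PiE[OF finD, of "\<lambda>_. FF"] finF by simp
  have resInj: "restrict \<mu> DD \<in> Inj" if "inj_on \<mu> DD" "\<mu> ` DD \<subseteq> FF" for \<mu>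
  proof -
    have "inj_on (restrict \<mu> DD) DD" using that(1) by (simp add: inj_on_def)
    then show ?thesis using that(2) unfolding Inj_def by auto
  qed
  have rescost: "cost (restrict \<mu> DD) = cost \<mu>" for \<mu> unfolding cost_def by simp
  obtain f where f: "f ` DD \<subseteq> FF" "inj_on f DD" using card_le_inj[OF finD finF cardle] by blast
  have Injne: "Inj \<noteq> {}" using resInj[OF f(2) f(1)] by blast
  obtain m where mI: "m \<in> Inj" and mmin: "cost m = Min (cost ` Inj)"
    using Min_in[of "cost ` Inj"] finInj Injne by (metis (no_types, lifting) finite_imageI image_iff image_is_empty)
  have injm: "inj_on m DD" and imm: "m ` DD \<subseteq> FF" using mI unfolding Inj_def by auto
  have opt: "\<forall>\<mu>. inj_on \<mu> DD \<and> \<mu> ` DD \<subseteq> FF \<longrightarrow> (\<Sum>i\<in>DD. l i (m i)) \<le> (\<Sum>i\<in>DD. l i (\<mu> i))"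
  proof (intro allI impI)
    fix \<mu> assume mu: "inj_on \<mu> DD \<and> \<mu> ` DD \<subseteq> FF"
    have "cost m \<le> cost (restrict \<mu> DD)" using mmin resInj mu finInj by simp
    then show "(\<Sum>i\<in>DD. l i (m i)) \<le> (\<Sum>i\<in>DD. l i (\<mu> i))" using rescost unfolding cost_def by simp
  qed
  have optA: "\<forall>A\<subseteq>S. \<forall>\<mu>. bij_betw \<mu> A (m ` A) \<longrightarrow> (\<Sum>i\<in>A. l i (m i)) \<le> (\<Sum>i\<in>A. l i (\<mu> i))"
    if "S \<subseteq> DD" for S
    using restrict_opt[OF finD injm imm opt] that by blast
  define Ls where "Ls = {l i j | i j. i \<in> DD \<and> j \<in> FF}"
  have Ls_eq: "Ls = (\<lambda>(i, j). l i j) ` (DD \<times> FF)" unfolding Ls_def by auto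
  have finLs: "finite Ls" using finD finF Ls_eq by simp
  have neLs: "Ls \<noteq> {}" using neD FFne Ls_eq by auto
  define L where "L = Min Ls"
  define R where "R = Max Ls"
  have Lle: "L \<le> l i j" if "i \<in> DD" "j \<in> FF" for i j
    unfolding L_def using that finLs by (intro Min_le) (auto simp: Ls_def)
  have leR: "l i j \<le> R" if "i \<in> DD" "j \<in> FF" for i j
    unfolding R_def using that finLs by (intro Max_ge) (auto simp: Ls_def)
  have Lpos: "L > 0"
  proof -
    have "L \<in> Ls" unfolding L_def using Min_in[OF finLs neLs] .
    then show ?thesis using pos unfolding Ls_def by auto
  qed
  have rho: "\<rho> = R / L" unfolding \<rho>_def R_def L_def Ls_def ..
  obtain i1 where i1: "i1 \<in> DD" using neD by auto
  obtain j1 where j1: "j1 \<in> FF" using FFne by auto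
  have LR: "L \<le> R" using Lle[OF i1 j1] leR[OF i1 j1] by simp
  have rho1: "\<rho> \<ge> 1" using rho LR Lpos by simp
  define K where "K = nat \<lfloor>log 2 \<rho>\<rfloor>"
  have KB: "2 ^ K \<le> \<rho> \<and> \<rho> < 2 ^ (K + 1)" unfolding K_def using log_floor_bounds[OF rho1] .
  have Kint: "\<lfloor>log 2 \<rho>\<rfloor> = int K" unfolding K_def using rho1 by simp
  have RK: "R < 2 ^ (K + 1) * L" using KB rho Lpos by (simp add: divide_less_eq)
  define d where "d i = l i (m i)" for i
  define k where "k i = nat \<lfloor>log 2 (d i / L)\<rfloor>" for i
  have dLR: "L \<le> d i \<and> d i \<le> R" if "i \<in> DD" for i
    using Lle leR that imm unfolding d_def by auto
  have kb: "2 ^ k i * L \<le> d i \<and> d i < 2 ^ (k i + 1) * L \<and> k i \<le> K" if i: "i \<in> DD" for i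
  proof -
    have d1: "d i / L \<ge> 1" using dLR[OF i] Lpos by simp
    have "2 ^ k i \<le> d i / L \<and> d i / L < 2 ^ (k i + 1)" unfolding k_def using log_floor_bounds[OF d1] .
    moreover have "d i / L \<le> \<rho>" using dLR[OF i] Lpos rho by (simp add: divide_right_mono)
    then have "k i \<le> K" unfolding k_def K_def using log_floor_mono[OF d1] by blast
    ultimately show ?thesis using Lpos by (simp add: le_divide_eq divide_less_eq)
  qed
  have dpos: "d i > 0" if "i \<in> DD" for i using dLR[OF that] Lpos by simp
  have q1: "q \<ge> 1" unfolding q_def by simp
  define c :: nat where "c = 2 + nat \<lceil>sqrt (real q)\<rceil>"
  have "sqrt (real q) \<ge> 0" by simp
  then have ceil0: "\<lceil>sqrt (real q)\<rceil> \<ge> 0" by linarith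
  have cpos: "0 < c" unfolding c_def by simp
  have cint: "int c = 2 + \<lceil>sqrt (real q)\<rceil>" unfolding c_def using ceil0 by simp
  have sqc: "sqrt (real q) \<le> real c - 2" unfolding c_def
    by (simp add: of_nat_nat)
  define a where "a kk = 2 ^ (kk + 2) * L" for kk :: nat
  have apos: "a kk > 0" for kk unfolding a_def using Lpos by simp
  define z where "z kk p = (\<lambda>t. \<lfloor>(p :: real ^ 'q) $ t / a kk\<rfloor>)" for kk p
  define col where "col kk p = (\<lambda>t. z kk p t mod int c)" for kk p
  define Colors where "Colors = PiE (UNIV :: 'q set) (\<lambda>_. {0..<int c})"
  have col_in: "col kk p \<in> Colors" for kk p
  proof -
    have cp: "int c > 0" using cint ceil0 by linarith
    show ?thesis unfolding Colors_def col_def PiE_UNIV_domain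
      using pos_mod_sign[OF cp] pos_mod_bound[OF cp] by auto
  qed
  have cardC: "card Colors = c ^ q"
    unfolding Colors_def q_def by (simp add: card_PiE)
  have finC: "finite Colors" unfolding Colors_def by (simp add: finite_PiE)
  obtain enc where enc: "bij_betw enc Colors {0..<card Colors}" using ex_bij_betw_finite_nat[OF finC] by blast
  define cq where "cq = c ^ q"
  have enc_lt: "enc (col kk p) < cq" for kk p using enc col_in cardC unfolding cq_def bij_betw_def by auto
  have cq2: "cq \<ge> 2"
  proof -
    have "c \<le> c ^ q" using q1 c_def by (simp add: self_le_power)
    then show ?thesis unfolding cq_def c_def by simp
  qed
  define reg where "reg i = (if k i = K then 0 else 1 + k i * cq + enc (col (k i) i))" for i
  define U where "U = K * cq + 1"
  define r where "r = K * cq + 2"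
  have reg_lt: "reg i < U" if i: "i \<in> DD" for i
  proof (cases "k i = K")
    case True then show ?thesis unfolding reg_def U_def by simp
  next
    case False
    then have "k i + 1 \<le> K" using kb[OF i] by simp
    then have "(k i + 1) * cq \<le> K * cq" by (rule mult_le_mono1)
    then show ?thesis using False enc_lt[of "k i" i] unfolding reg_def U_def by simp
  qed
  have reg_inj: "k i = k i' \<and> (k i \<noteq> K \<longrightarrow> col (k i) i = col (k i') i')"
    if "i \<in> DD" "i' \<in> DD" "reg i = reg i'" for i i'
  proof (cases "k i = K"; cases "k i' = K")
    assume "k i = K" "k i' = K" then show ?thesis by simp
  next
    assume "k i = K" "k i' \<noteq> K" then show ?thesis using that(3) unfolding reg_def by simp
  next
    assume "k i \<noteq> K" "k i' = K" then show ?thesis using that(3) unfolding reg_def by simp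
  next
    assume ne: "k i \<noteq> K" "k i' \<noteq> K"
    let ?e = "enc (col (k i) i)" and ?e' = "enc (col (k i') i')"
    have eq: "k i * cq + ?e = k i' * cq + ?e'" using that(3) ne unfolding reg_def by simp
    have lt: "?e < cq" "?e' < cq" using enc_lt by auto
    have "(k i * cq + ?e) div cq = k i" using lt cq2 by simp
    moreover have "(k i' * cq + ?e') div cq = k i'" using lt cq2 by simp
    ultimately have kk: "k i = k i'" using eq by simp
    then have "?e = ?e'" using eq by simp
    then have "col (k i) i = col (k i') i'" using enc col_in unfolding bij_betw_def by (auto dest: inj_onD)
    then show ?thesis using kk by simp
  qed
  define B where "B i = (if k i = K then R else sqrt (real q) * a (k i) + 2 ^ (k i + 1) * L)" for i
  define key where "key i = (if k i = K then (\<lambda>_. 0) else z (k i) i)" for i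
  define DP where "DP s = {i \<in> DD. reg i = s}" for s
  define FP where "FP s = m ` DP s \<union> (if s = U then FF - m ` DD else {})" for s
  have DPsub: "DP s \<subseteq> DD" for s unfolding DP_def by auto
  have finDP: "finite (DP s)" for s using finite_subset[OF DPsub finD] .
  have DPU: "DP U = {}" using reg_lt unfolding DP_def by fastforce
  have ex: "\<exists>x \<beta>. is_equilibrium (DP s) (FP s) l dem cap x \<beta> \<and> eq_delay (DP s) (FP s) l dem \<beta> \<le> (\<Sum>i\<in>DP s. B i)"
    if s: "s < r" for s
  proof (cases "s = U")
    case True
    have "is_equilibrium (DP s) (FP s) l dem cap (\<lambda>_ _. 0) (\<lambda>_. 0)"
      using True DPU unfolding is_equilibrium_def is_assignment_def cap1 by simp
    moreover have "eq_delay (DP s) (FP s) l dem (\<lambda>_. 0) \<le> (\<Sum>i\<in>DP s. B i)"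
      using True DPU unfolding eq_delay_def by simp
    ultimately show ?thesis by blast
  next
    case False
    then have FPs: "FP s = m ` DP s" unfolding FP_def by simp
    have intra: "\<forall>i\<in>DP s. \<forall>i'\<in>DP s. key i = key i' \<longrightarrow> l i (m i') \<le> B i"
    proof (intro ballI impI)
      fix i i' assume ii: "i \<in> DP s" "i' \<in> DP s" and kyq: "key i = key i'"
      have iD: "i \<in> DD" "i' \<in> DD" using ii DPsub by auto
      have kk: "k i = k i'" using reg_inj[OF iD] ii unfolding DP_def by simp
      show "l i (m i') \<le> B i"
      proof (cases "k i = K")
        case True then show ?thesis using leR[OF iD(1)] imm iD(2) unfolding B_def by auto
      next
        case False
        have zz: "z (k i) i = z (k i) i'" using kyq False kk unfolding key_def by simp
        have "\<forall>t. \<lfloor>i $ t / a (k i)\<rfloor> = \<lfloor>i' $ t / a (k i)\<rfloor>" using zz unfolding z_def by metis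
        then have d1: "dist i i' \<le> sqrt (real q) * a (k i)" unfolding q_def by (rule same_cube_dist[OF apos])
        have d2: "dist i' (m i') < 2 ^ (k i + 1) * L" using kb[OF iD(2)] kk unfolding d_def ldist by simp
        have "l i (m i') \<le> dist i i' + dist i' (m i')" unfolding ldist by (rule dist_triangle)
        then show ?thesis using d1 d2 False unfolding B_def by simp
      qed
    qed
    have cross: "\<forall>i\<in>DP s. \<forall>i'\<in>DP s. key i \<noteq> key i' \<longrightarrow> B i \<le> l i (m i')"
    proof (intro ballI impI)
      fix i i' assume ii: "i \<in> DP s" "i' \<in> DP s" and kyq: "key i \<noteq> key i'"
      have iD: "i \<in> DD" "i' \<in> DD" using ii DPsub by auto
      have rr: "reg i = reg i'" using ii unfolding DP_def by simp
      have kk: "k i = k i'" using reg_inj[OF iD rr] by simp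
      have nK: "k i \<noteq> K" using kyq kk unfolding key_def by auto
      have cc: "col (k i) i = col (k i) i'" using reg_inj[OF iD rr] nK kk by simp
      have "z (k i) i \<noteq> z (k i) i'" using kyq nK kk unfolding key_def by simp
      then obtain t where t: "z (k i) i t \<noteq> z (k i) i' t" by auto
      have tm: "z (k i) i t mod int c = z (k i) i' t mod int c" using cc unfolding col_def by metis
      have "\<bar>i $ t - i' $ t\<bar> > (int c - 1) * a (k i)"
        using diff_cube_dist[OF apos _ t[unfolded z_def] tm[unfolded z_def]] cpos by simp
      moreover have "\<bar>i $ t - i' $ t\<bar> \<le> dist i i'" using dist_vec_nth_le[of i t i'] by (simp add: dist_real_def)
      ultimately have d1: "dist i i' > (real c - 1) * a (k i)" by simp
      have d2: "dist i' (m i') < 2 ^ (k i + 1) * L" using kb[OF iD(2)] kk unfolding d_def ldist by simp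
      have tri: "dist i i' \<le> dist i (m i') + dist i' (m i')" using dist_triangle[of i i' "m i'"] by (simp add: dist_commute)
      have ak: "a (k i) = 2 * (2 ^ (k i + 1) * L)" unfolding a_def by simp
      have "sqrt (real q) * a (k i) \<le> (real c - 2) * a (k i)" using sqc apos by (simp add: mult_right_mono)
      then have "B i \<le> dist i (m i')" using d1 d2 tri nK ak unfolding B_def by (simp add: algebra_simps)
      then show "B i \<le> l i (m i')" unfolding ldist .
    qed
    obtain x \<beta> where xb: "is_equilibrium (DP s) (m ` DP s) l (\<lambda>_. 1) (\<lambda>_. 1) x \<beta>"
      "eq_delay (DP s) (m ` DP s) l (\<lambda>_. 1) \<beta> \<le> (\<Sum>i\<in>DP s. B i)"
      using region_eq[OF finDP inj_on_subset[OF injm DPsub] optA[OF DPsub] intra cross] by blast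
    then show ?thesis unfolding FPs dem1 cap1 by blast
  qed
  have "\<forall>s. \<exists>p. s < r \<longrightarrow> is_equilibrium (DP s) (FP s) l dem cap (fst p) (snd p) \<and>
      eq_delay (DP s) (FP s) l dem (snd p) \<le> (\<Sum>i\<in>DP s. B i)"
    using ex by fastforce
  then obtain P where P: "\<And>s. s < r \<Longrightarrow> is_equilibrium (DP s) (FP s) l dem cap (fst (P s)) (snd (P s)) \<and>
      eq_delay (DP s) (FP s) l dem (snd (P s)) \<le> (\<Sum>i\<in>DP s. B i)"
    by metis
  define X where "X s = fst (P s)" for s
  define Bt where "Bt s = snd (P s)" for s
  have isreg: "is_regionalized DD FF l dem cap r DP FP X Bt"
    unfolding is_regionalized_def
  proof (intro conjI allI impI)
    show "(\<Union>s<r. DP s) = DD"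
    proof
      show "(\<Union>s<r. DP s) \<subseteq> DD" using DPsub by auto
      show "DD \<subseteq> (\<Union>s<r. DP s)"
      proof
        fix i assume i: "i \<in> DD"
        then have "reg i < r" using reg_lt[OF i] unfolding U_def r_def by simp
        then show "i \<in> (\<Union>s<r. DP s)" using i unfolding DP_def by auto
      qed
    qed
    show "(\<Union>s<r. FP s) = FF"
    proof
      show "(\<Union>s<r. FP s) \<subseteq> FF" using DPsub imm unfolding FP_def by (auto split: if_splits)
      show "FF \<subseteq> (\<Union>s<r. FP s)"
      proof
        fix j assume j: "j \<in> FF"
        show "j \<in> (\<Union>s<r. FP s)"
        proof (cases "j \<in> m ` DD")
          case True
          then obtain i where i: "i \<in> DD" "j = m i" by auto
          then have "reg i < r" using reg_lt[OF i(1)] unfolding U_def r_def by simp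
          moreover have "j \<in> FP (reg i)" using i unfolding FP_def DP_def by auto
          ultimately show ?thesis by blast
        next
          case False
          then have "j \<in> FP U" using j unfolding FP_def by simp
          moreover have "U < r" unfolding U_def r_def by simp
          ultimately show ?thesis by blast
        qed
      qed
    qed
  next
    fix s t assume "s < r" "t < r" "s \<noteq> t"
    then show "DP s \<inter> DP t = {}" unfolding DP_def by auto
  next
    fix s t assume st: "s < r" "t < r" "s \<noteq> t"
    have a1: "m ` DP s \<inter> m ` DP t = {}"
      using st injm DPsub unfolding DP_def by (auto dest: inj_onD)
    have a2: "m ` DP s \<inter> (FF - m ` DD) = {}" "m ` DP t \<inter> (FF - m ` DD) = {}"
      using DPsub by auto
    show "FP s \<inter> FP t = {}" unfolding FP_def using a1 a2 st by auto
  next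
    fix s assume "s < r"
    have "card (DP s) = card (m ` DP s)" using card_image[OF inj_on_subset[OF injm DPsub]] by simp
    also have "\<dots> \<le> card (FP s)"
    proof (rule card_mono)
      show "finite (FP s)" using finDP finF unfolding FP_def by auto
    qed (auto simp: FP_def)
    finally show "(\<Sum>i\<in>DP s. dem i) \<le> (\<Sum>j\<in>FP s. cap j)" unfolding dem1 cap1 by simp
  next
    fix s assume "s < r"
    then show "is_equilibrium (DP s) (FP s) l dem cap (X s) (Bt s)" using P unfolding X_def Bt_def by blast
  qed
  have rbound: "int r \<le> (2 + \<lceil>sqrt (real q)\<rceil>) ^ q * (\<lfloor>log 2 \<rho>\<rfloor> + 1)"
  proof -
    have "r \<le> cq * (K + 1)" unfolding r_def using cq2 by (simp add: algebra_simps)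
    then have "int r \<le> int cq * (int K + 1)" by (metis of_nat_Suc Suc_eq_plus1 of_nat_le_iff of_nat_mult add.commute)
    then show ?thesis unfolding Kint cq_def cint[symmetric] by simp
  qed
  define C where "C = 4 * sqrt (real q) + 2"
  have C2: "C \<ge> 2" unfolding C_def by simp
  have B_le: "B i \<le> C * d i" if i: "i \<in> DD" for i
  proof (cases "k i = K")
    case True
    have "R < 2 * (2 ^ K * L)" using RK by simp
    also have "\<dots> \<le> 2 * d i" using kb[OF i] True by simp
    also have "\<dots> \<le> C * d i" using C2 dpos[OF i] by (simp add: mult_right_mono)
    finally show ?thesis unfolding B_def using True by simp
  next
    case False
    have "B i = (2 ^ k i * L) * C" unfolding B_def C_def a_def using False by (simp add: algebra_simps)
    also have "\<dots> \<le> d i * C" using kb[OF i] C2 by (intro mult_right_mono) auto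
    finally show ?thesis by (simp add: mult.commute)
  qed
  have delay_le: "regionalized_delay DD FF l dem r DP FP Bt \<le> C * (\<Sum>i\<in>DD. d i)"
  proof -
    have "regionalized_delay DD FF l dem r DP FP Bt \<le> (\<Sum>s<r. \<Sum>i\<in>DP s. B i)"
      unfolding regionalized_delay_def using P unfolding Bt_def by (intro sum_mono) auto
    also have "(\<Sum>s<r. \<Sum>i\<in>DP s. B i) = (\<Sum>i\<in>DD. B i)"
    proof -
      have "reg ` DD \<subseteq> {..<r}" using reg_lt unfolding U_def r_def by fastforce
      then show ?thesis unfolding DP_def using sum.group[OF finD _, of "{..<r}" reg B] by simp
    qed
    also have "\<dots> \<le> (\<Sum>i\<in>DD. C * d i)" using B_le by (intro sum_mono) auto
    finally show ?thesis by (simp add: sum_distrib_left)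
  qed
  have lb: "(\<Sum>i\<in>DD. d i) \<le> assignment_cost DD FF l y" if "is_assignment DD FF dem cap y" for y
    using lower_bound[OF finD finF injm imm opt] that unfolding d_def dem1 cap1 by blast
  have C0: "C \<ge> 0" using C2 by simp
  have part3: "\<forall>y. is_assignment DD FF dem cap y \<longrightarrow>
         regionalized_delay DD FF l dem r DP FP Bt \<le> (4 * sqrt (real q) + 2) * assignment_cost DD FF l y"
  proof (intro allI impI)
    fix y assume "is_assignment DD FF dem cap y"
    then have "C * (\<Sum>i\<in>DD. d i) \<le> C * assignment_cost DD FF l y" using lb C0 by (simp add: mult_left_mono)
    then show "regionalized_delay DD FF l dem r DP FP Bt \<le> (4 * sqrt (real q) + 2) * assignment_cost DD FF l y"
      using delay_le unfolding C_def by linarith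
  qed
  have part4: "\<forall>r' DP' FP' x' \<beta>'. is_regionalized DD FF l dem cap r' DP' FP' x' \<beta>' \<longrightarrow>
         regionalized_delay DD FF l dem r DP FP Bt \<le> (4 * sqrt (real q) + 2) * regionalized_delay DD FF l dem r' DP' FP' \<beta>'"
  proof (intro allI impI)
    fix r' DP' FP' x' \<beta>' assume R': "is_regionalized DD FF l dem cap r' DP' FP' x' \<beta>'"
    obtain y where y: "is_assignment DD FF (\<lambda>_. 1) (\<lambda>_. 1) y"
      "assignment_cost DD FF l y \<le> regionalized_delay DD FF l (\<lambda>_. 1) r' DP' FP' \<beta>'"
      using reg_lower[OF finD finF R'[unfolded dem1 cap1]] by blast
    have "regionalized_delay DD FF l dem r DP FP Bt \<le> C * assignment_cost DD FF l y"
      using part3 y(1) unfolding dem1 cap1 C_def by blast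
    also have "\<dots> \<le> C * regionalized_delay DD FF l dem r' DP' FP' \<beta>'"
      using y(2) C0 unfolding dem1 by (simp add: mult_left_mono)
    finally show "regionalized_delay DD FF l dem r DP FP Bt \<le> (4 * sqrt (real q) + 2) * regionalized_delay DD FF l dem r' DP' FP' \<beta>'"
      unfolding C_def .
  qed
  show ?thesis using isreg rbound part3 part4 by blast
qed

end
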